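(* Let $n,m,l$ be positive integers, $f:\mathbb{R}^n\times\mathbb{R}^m\to\mathbb{R}^n$, $g:\mathbb{R}^n\times\mathbb{R}^m\to\mathbb{R}^{n\times l}$ smooth with $f(0,0)=0$, $g(0,0)=0$, and consider $\dot x=f(x,u)+g(x,u)\theta$ with constant unknown $\theta\in\mathbb{R}^l$. Let $k:\mathbb{R}^l\times\mathbb{R}^n\to\mathbb{R}^m$ be smooth with $k(\vartheta,0)=0$, and $V_\vartheta,Q_\vartheta:\mathbb{R}^n\to\mathbb{R}_+$ continuous, positive definite, radially unbounded, with $(\vartheta,x)\mapsto V_\vartheta(x),Q_\vartheta(x)$ continuous, such that: (H1) for each $\vartheta$, the origin is globally asymptotically stable for $\dot x=f(x,k(\vartheta,x))+g(x,k(\vartheta,x))\vartheta$ and every solution satisfies $V_\vartheta(x(t))\le Q_\vartheta(x(0))$ for $t\ge0$; (H2) for every nonempty compact $\Theta\subset\mathbb{R}^l$ and $M\ge0$ there is $R>0$ with $V_\vartheta(x)\le M,\ \vartheta\in\Theta\Rightarrow|x|\le R$; (H3) there is a positive integer $N$ such that: if there exist $0=\tau_0<\dots<\tau_N$, $\theta,d_0,\dots,d_N\in\mathbb{R}^l$ with all $d_i\ne0$, and a right differentiable $x\in C^0([0,\tau_N];\mathbb{R}^n)\cap C^1([0,\tau_N]\setminus\{\tau_0,\dots,\tau_N\};\mathbb{R}^n)$ with $\dot x(t)=f(x(t),k(\theta+d_i,x(t)))+g(x(t),k(\theta+d_i,x(t)))\theta$ on $[\tau_i,\tau_{i+1})$,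 $i=0,\dots,N-1$, and $g(x(t),k(\theta+d_j,x(t)))d_{i+1}=0$ for $t\in[\tau_j,\tau_{j+1}]$, $i=0,\dots,N-1$, $j=0,\dots,i$, then $x\equiv0$ on $[0,\tau_N]$. Suppose moreover that for each $\vartheta\in\mathbb{R}^l$ the origin is globally exponentially stable for $\dot x=f(x,k(\vartheta,x))+g(x,k(\vartheta,x))\vartheta$, i.e. there are $M_\vartheta,\omega_\vartheta>0$ with $|x(t)|\le M_\vartheta e^{-\omega_\vartheta t}|x(0)|$ for all solutions and $t\ge0$, and that for every nonempty compact $\Theta\subset\mathbb{R}^l$ there exist $K_2>K_1>0$ with $K_1|x|^2\le V_\vartheta(x)\le Q_\vartheta(x)\le K_2|x|^2$ for all $x\in\mathbb{R}^n$, $\vartheta\in\Theta$. Let $T>0$, let $a:\mathbb{R}^n\to\mathbb{R}_+$ be continuous, positive definite with $\sup\{|x|^{-2}a(x):x\ne0\}<+\infty$, and let $\tilde N>N$ be an integer. Then there exist constants $\tilde M_{\theta,\hat\theta}>0$, $(\theta,\hat\theta)\in\mathbb{R}^l\times\mathbb{R}^l$, such that for every $\theta\in\mathbb{R}^l$, $x_0\in\mathbb{R}^n$, $\hat\theta_0\in\mathbb{R}^l$ the solution of the hybrid closed-loop system (see context) with $x(0)=x_0$, $\hat\theta(0)=\hat\theta_0$ satisfies $|x(t)|\le\tilde M_{\theta,\hat\theta_0}e^{-\omega_\theta t}|x_0|$ for all $t\ge0$.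
   Context: Hybrid closed-loop system: event times $\tau_0=0$, $\tau_{i+1}=\min(\tau_i+T,r_i)$. On $[\tau_i,\tau_{i+1})$: $u(t)=k(\hat\theta(\tau_i),x(t))$, $\hat\theta(t)=\hat\theta(\tau_i)$, $x$ continuous solving $\dot x=f(x,u)+g(x,u)\theta$. Trigger: for $x(\tau_i)\ne0$, $r_i=\inf\{t>\tau_i:V_{\hat\theta(\tau_i)}(x(t))=Q_{\hat\theta(\tau_i)}(x(\tau_i))+a(x(\tau_i))\}$ ($\inf\emptyset=+\infty$); for $x(\tau_i)=0$, $r_i=\tau_i+T$. With $p(t,\sigma)=x(t)-x(\sigma)-\int_\sigma^tf(x(s),u(s))ds$, $q(t,\sigma)=\int_\sigma^tg(x(s),u(s))ds$, $\mu_{i+1}=\min\{\tau_j:j\in\{0,\dots,i\},\tau_j\ge\tau_{i+1}-\tilde NT\}$, $G=\iint_{[\mu_{i+1},\tau_{i+1}]^2}q'(t,\sigma)q(t,\sigma)d\sigma dt$, $Z=\iint_{[\mu_{i+1},\tau_{i+1}]^2}q'(t,\sigma)p(t,\sigma)d\sigma dt$, the update is $\hat\theta(\tau_{i+1})=\arg\min\{|\vartheta-\hat\theta(\tau_i)|^2:\vartheta\in\mathbb{R}^l,\ Z=G\vartheta\}$. Positive definite: $V(0)=0$, $V(x)>0$ for $x\ne0$; radially unbounded: sublevel sets compact. *)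

theory Defs
  imports "HOL-Analysis.Analysis"
begin

text \<open>Smooth (C-infinity) maps between Euclidean spaces: there is a family of
  iterated directional derivatives D vs (D [] = f), each continuous, and each
  Frechet differentiable with derivative v |-> D (v # vs).\<close>
definition smooth :: "('a::euclidean_space \<Rightarrow> 'b::euclidean_space) \<Rightarrow> bool" where
  "smooth f \<longleftrightarrow> (\<exists>D :: 'a list \<Rightarrow> 'a \<Rightarrow> 'b.
      (\<forall>x. D [] x = f x) \<and> (\<forall>vs. continuous_on UNIV (D vs)) \<and>
      (\<forall>vs x. (D vs has_derivative (\<lambda>v. D (v # vs) x)) (at x)))"

definition pos_def :: "('a::real_normed_vector \<Rightarrow> real) \<Rightarrow> bool" where
  "pos_def V \<longleftrightarrow> V 0 = 0 \<and> (\<forall>x. x \<noteq> 0 \<longrightarrow> V x > 0)"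

definition rad_unbounded :: "('a::real_normed_vector \<Rightarrow> real) \<Rightarrow> bool" where
  "rad_unbounded V \<longleftrightarrow> (\<forall>c. compact {x. V x \<le> c})"

definition is_sol :: "('a::real_normed_vector \<Rightarrow> 'a) \<Rightarrow> (real \<Rightarrow> 'a) \<Rightarrow> bool" where
  "is_sol F x \<longleftrightarrow> (\<forall>t\<ge>0. (x has_vector_derivative F (x t)) (at t within {0..}))"

definition GAS :: "('a::real_normed_vector \<Rightarrow> 'a) \<Rightarrow> bool" where
  "GAS F \<longleftrightarrow> (\<forall>x0. \<exists>x. is_sol F x \<and> x 0 = x0) \<and>
     (\<forall>\<epsilon>>0. \<exists>\<delta>>0. \<forall>x. is_sol F x \<and> norm (x 0) < \<delta> \<longrightarrow> (\<forall>t\<ge>0. norm (x t) < \<epsilon>)) \<and>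
     (\<forall>x. is_sol F x \<longrightarrow> (x \<longlongrightarrow> 0) at_top)"

definition cl_field ::
  "(real^'n \<Rightarrow> real^'m \<Rightarrow> real^'n) \<Rightarrow> (real^'n \<Rightarrow> real^'m \<Rightarrow> real^'l^'n)
   \<Rightarrow> (real^'l \<Rightarrow> real^'n \<Rightarrow> real^'m) \<Rightarrow> real^'l \<Rightarrow> real^'l \<Rightarrow> real^'n \<Rightarrow> real^'n" where
  "cl_field f g k \<eta> \<theta> x = f x (k \<eta> x) + g x (k \<eta> x) *v \<theta>"

definition sint :: "real \<Rightarrow> real \<Rightarrow> (real \<Rightarrow> 'a::euclidean_space) \<Rightarrow> 'a" where
  "sint a b h = (if a \<le> b then integral {a..b} h else - integral {b..a} h)"

definition H3 ::
  "(real^'n \<Rightarrow> real^'m \<Rightarrow> real^'n) \<Rightarrow> (real^'n \<Rightarrow> real^'m \<Rightarrow> real^'l^'n)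
   \<Rightarrow> (real^'l \<Rightarrow> real^'n \<Rightarrow> real^'m) \<Rightarrow> nat \<Rightarrow> bool" where
  "H3 f g k N \<longleftrightarrow>
    (\<forall>(\<tau>::nat \<Rightarrow> real) (\<theta>::real^'l) (d::nat \<Rightarrow> real^'l) (x::real \<Rightarrow> real^'n).
      \<tau> 0 = 0 \<and> (\<forall>i<N. \<tau> i < \<tau> (Suc i)) \<and> (\<forall>i\<le>N. d i \<noteq> 0) \<and>
      continuous_on {0..\<tau> N} x \<and>
      (\<forall>i<N. \<forall>t\<in>{\<tau> i..<\<tau> (Suc i)}.
         (x has_vector_derivative cl_field f g k (\<theta> + d i) \<theta> (x t)) (at t within {\<tau> i..\<tau> (Suc i)})) \<and>
      (\<forall>i<N. \<forall>j\<le>i. \<forall>t\<in>{\<tau> j..\<tau> (Suc j)}.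
         g (x t) (k (\<theta> + d j) (x t)) *v d (Suc i) = 0)
      \<longrightarrow> (\<forall>t\<in>{0..\<tau> N}. x t = 0))"

definition hybrid_sol ::
  "(real^'n \<Rightarrow> real^'m \<Rightarrow> real^'n) \<Rightarrow> (real^'n \<Rightarrow> real^'m \<Rightarrow> real^'l^'n)
   \<Rightarrow> (real^'l \<Rightarrow> real^'n \<Rightarrow> real^'m) \<Rightarrow> (real^'l \<Rightarrow> real^'n \<Rightarrow> real)
   \<Rightarrow> (real^'l \<Rightarrow> real^'n \<Rightarrow> real) \<Rightarrow> (real^'n \<Rightarrow> real) \<Rightarrow> real \<Rightarrow> nat
   \<Rightarrow> real^'l \<Rightarrow> (nat \<Rightarrow> real) \<Rightarrow> (real \<Rightarrow> real^'n) \<Rightarrow> (real \<Rightarrow> real^'l) \<Rightarrow> bool" where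
  "hybrid_sol f g k V Q a T Nt \<theta> \<tau> x th \<longleftrightarrow>
    \<tau> 0 = 0 \<and>
    (\<forall>t\<ge>0. \<exists>i. t < \<tau> i) \<and>
    (\<forall>i. \<tau> (Suc i) =
       (if x (\<tau> i) = 0 then \<tau> i + T
        else (let S = {t. t > \<tau> i \<and> V (th (\<tau> i)) (x t) = Q (th (\<tau> i)) (x (\<tau> i)) + a (x (\<tau> i))}
              in if S = {} then \<tau> i + T else min (\<tau> i + T) (Inf S)))) \<and>
    (\<forall>i. \<forall>t\<in>{\<tau> i..<\<tau> (Suc i)}. th t = th (\<tau> i)) \<and>
    continuous_on {0..} x \<and>
    (\<forall>i. \<forall>t\<in>{\<tau> i..<\<tau> (Suc i)}.
       (x has_vector_derivative cl_field f g k (th (\<tau> i)) \<theta> (x t)) (at t within {\<tau> i..\<tau> (Suc i)})) \<and>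
    (\<forall>i. let u = (\<lambda>s. k (th s) (x s));
             p = (\<lambda>t \<sigma>. x t - x \<sigma> - sint \<sigma> t (\<lambda>s. f (x s) (u s)));
             q = (\<lambda>t \<sigma>. sint \<sigma> t (\<lambda>s. g (x s) (u s)));
             \<mu> = Min {\<tau> j | j. j \<le> i \<and> \<tau> j \<ge> \<tau> (Suc i) - real Nt * T};
             G = integral {\<mu>..\<tau> (Suc i)} (\<lambda>t. integral {\<mu>..\<tau> (Suc i)}
                    (\<lambda>\<sigma>. transpose (q t \<sigma>) ** q t \<sigma>));
             Z = integral {\<mu>..\<tau> (Suc i)} (\<lambda>t. integral {\<mu>..\<tau> (Suc i)}
                    (\<lambda>\<sigma>. transpose (q t \<sigma>) *v p t \<sigma>))
         in G *v th (\<tau> (Suc i)) = Z \<and>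
            (\<forall>\<eta>. G *v \<eta> = Z \<longrightarrow>
               (norm (th (\<tau> (Suc i)) - th (\<tau> i)))\<^sup>2 \<le> (norm (\<eta> - th (\<tau> i)))\<^sup>2))"

end

theory Submission
  imports Defs
begin


lemma zero_unique:
  fixes y :: "real \<Rightarrow> 'a::euclidean_space" and F :: "'a \<Rightarrow> 'a"
  assumes Fb: "\<And>z. norm z \<le> \<delta> \<Longrightarrow> norm (F z) \<le> L * norm z" and dp: "\<delta> > 0" and L0: "L \<ge> 0"
    and yc: "continuous_on {a..b} y"
    and yd: "\<And>t. t \<in> {a<..<b} \<Longrightarrow> (y has_vector_derivative F (y t)) (at t)"
    and ya: "y a = 0" and ab: "a \<le> b"
  shows "\<forall>t\<in>{a..b}. y t = 0"
proof (rule ccontr)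
  assume "\<not> (\<forall>t\<in>{a..b}. y t = 0)"
  then obtain t1 where t1: "t1 \<in> {a..b}" "y t1 \<noteq> 0" by auto
  define Z where "Z = {s \<in> {a..t1}. y s = 0}"
  have yc1: "continuous_on {a..t1} y" using yc t1 by (auto intro: continuous_on_subset)
  have "closed Z" unfolding Z_def
    using continuous_closed_preimage_constant[OF yc1] by simp
  moreover have "bounded Z" unfolding Z_def by (rule bounded_subset[of "{a..t1}"]) auto
  ultimately have cZ: "compact Z" by (simp add: compact_eq_bounded_closed)
  have aZ: "a \<in> Z" using ya t1 by (auto simp: Z_def)
  define c where "c = Sup Z"
  have cZ': "c \<in> Z" unfolding c_def
    using cZ aZ by (intro closed_contains_Sup) (auto intro: compact_imp_closed bounded_imp_bdd_above compact_imp_bounded)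
  have Zle: "\<And>s. s \<in> Z \<Longrightarrow> s \<le> c" unfolding c_def
    using cZ by (meson cSup_upper compact_imp_bounded bounded_imp_bdd_above)
  have yc0: "y c = 0" and ca: "a \<le> c" and ct: "c \<le> t1" using cZ' by (auto simp: Z_def)
  have ct1: "c < t1" using ct yc0 t1(2) by (cases "c = t1") auto
  have nz: "\<And>s. s \<in> {c<..t1} \<Longrightarrow> y s \<noteq> 0"
  proof
    fix s assume s: "s \<in> {c<..t1}" "y s = 0"
    then have "s \<in> Z" using ca by (auto simp: Z_def)
    from Zle[OF this] s show False by auto
  qed
  have "isCont y c \<or> True" by simp
  have "continuous (at c within {a..t1}) y"
    using yc1 ca ct by (simp add: continuous_on_eq_continuous_within)
  then obtain e where e: "e > 0" "\<And>s. s \<in> {a..t1} \<Longrightarrow> dist s c < e \<Longrightarrow> dist (y s) (y c) < \<delta>"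
    using dp unfolding continuous_within_eps_delta by blast
  define s1 where "s1 = min t1 (c + e/2)"
  have s1: "c < s1" "s1 \<le> t1" using e ct1 by (auto simp: s1_def)
  have small: "\<And>s. s \<in> {c..s1} \<Longrightarrow> norm (y s) \<le> \<delta>"
  proof -
    fix s assume "s \<in> {c..s1}"
    then have "s \<in> {a..t1}" "dist s c < e" using ca s1 e by (auto simp: s1_def dist_real_def)
    from e(2)[OF this] show "norm (y s) \<le> \<delta>" using yc0 by (simp add: dist_norm)
  qed
  define \<psi> where "\<psi> s = exp (- (2*L) * s) * (y s \<bullet> y s)" for s
  have "\<psi> c \<ge> \<psi> s1"
  proof (rule DERIV_nonpos_imp_decreasing_open[of c s1 \<psi>])
    show "c \<le> s1" using s1 by simp
    fix s assume s: "c < s" "s < s1"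
    then have sab: "s \<in> {a<..<b}" using ca s1 t1 by auto
    have d1: "(y has_derivative (\<lambda>h. h *\<^sub>R F (y s))) (at s)"
      using yd[OF sab] by (simp add: has_vector_derivative_def)
    have d2: "((\<lambda>s. y s \<bullet> y s) has_real_derivative (2 * (y s \<bullet> F (y s)))) (at s)"
      unfolding has_field_derivative_def
      by (rule has_derivative_eq_rhs[OF has_derivative_inner[OF d1 d1]]) (auto simp: inner_commute algebra_simps fun_eq_iff)
    have d3: "(\<psi> has_real_derivative
       (exp (- (2*L) * s) * (- (2*L)) * (y s \<bullet> y s) + exp (- (2*L) * s) * (2 * (y s \<bullet> F (y s))))) (at s)"
      unfolding \<psi>_def
      by (auto intro!: derivative_eq_intros d2)
    have "y s \<bullet> F (y s) \<le> norm (y s) * norm (F (y s))" by (rule norm_cauchy_schwarz)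
    also have "\<dots> \<le> norm (y s) * (L * norm (y s))"
      using Fb small s by (intro mult_left_mono) auto
    finally have "y s \<bullet> F (y s) \<le> L * (y s \<bullet> y s)"
      by (simp add: power2_norm_eq_inner[symmetric] power2_eq_square algebra_simps)
    then have "exp (- (2*L) * s) * (- (2*L)) * (y s \<bullet> y s) + exp (- (2*L) * s) * (2 * (y s \<bullet> F (y s))) \<le> 0"
    proof -
      assume h: "y s \<bullet> F (y s) \<le> L * (y s \<bullet> y s)"
      have "exp (- (2*L) * s) * (- (2*L)) * (y s \<bullet> y s) + exp (- (2*L) * s) * (2 * (y s \<bullet> F (y s)))
          = 2 * exp (- (2*L) * s) * (y s \<bullet> F (y s) - L * (y s \<bullet> y s))" by (simp add: algebra_simps)
      also have "\<dots> \<le> 0" using h by (intro mult_nonneg_nonpos) auto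
      finally show ?thesis .
    qed
    then show "\<exists>D. (\<psi> has_real_derivative D) (at s) \<and> D \<le> 0" using d3 by blast
  next
    have "continuous_on {c..s1} y" using yc1 ca s1 by (auto intro: continuous_on_subset)
    then show "continuous_on {c..s1} \<psi>" unfolding \<psi>_def by (auto intro!: continuous_intros)
  qed
  then have "\<psi> s1 \<le> 0" using yc0 by (simp add: \<psi>_def)
  then have "y s1 \<bullet> y s1 \<le> 0" unfolding \<psi>_def by (simp add: mult_le_0_iff)
  then have "y s1 = 0" by (metis inner_gt_zero_iff not_le)
  with nz[of s1] s1 show False by auto
qed


lemma smooth_has_derivative:
  assumes "smooth h" shows "h differentiable (at z)" and "continuous_on UNIV h"
proof -
  from assms obtain D where D: "\<forall>x. D [] x = h x" "\<forall>vs. continuous_on UNIV (D vs)"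
    "\<forall>vs x. (D vs has_derivative (\<lambda>v. D (v # vs) x)) (at x)" unfolding smooth_def by blast
  have e: "D [] = h" using D(1) by auto
  show "h differentiable (at z)" using D(3) e unfolding differentiable_def by metis
  show "continuous_on UNIV h" using D(2) e by metis
qed

lemma bl_mv: "bounded_linear (\<lambda>M::real^'a^'b. M *v v)"
  unfolding linear_conv_bounded_linear[symmetric]
  by (rule linearI) (simp_all add: matrix_vector_mult_add_rdistrib scaleR_matrix_vector_assoc)

lemma lin_bound_at0:
  fixes F :: "'a::real_normed_vector \<Rightarrow> 'b::real_normed_vector"
  assumes "F differentiable (at 0)" "F 0 = 0"
  shows "\<exists>\<delta>>0. \<exists>L\<ge>0. \<forall>z. norm z \<le> \<delta> \<longrightarrow> norm (F z) \<le> L * norm z"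
proof -
  from assms(1) obtain F' where d: "(F has_derivative F') (at 0)" unfolding differentiable_def by blast
  then have bl: "bounded_linear F'" and
    a: "\<forall>e>0. \<exists>d>0. \<forall>y. norm(y - 0) < d \<longrightarrow> norm (F y - F 0 - F'(y - 0)) \<le> e * norm (y - 0)"
    unfolding has_derivative_at_alt by blast+
  from bounded_linear.pos_bounded[OF bl] obtain B where B: "B > 0" "\<And>z. norm (F' z) \<le> norm z * B" by blast
  from a[rule_format, of 1] obtain d where dd: "d > 0" "\<And>y. norm y < d \<Longrightarrow> norm (F y - F' y) \<le> norm y"
    using assms(2) by auto
  have "\<forall>z. norm z \<le> d/2 \<longrightarrow> norm (F z) \<le> (B + 1) * norm z"
  proof (intro allI impI)
    fix z :: 'a assume "norm z \<le> d/2"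
    then have "norm z < d" using dd by auto
    have "norm (F z) \<le> norm (F z - F' z) + norm (F' z)" using norm_triangle_ineq[of "F z - F' z" "F' z"] by simp
    also have "\<dots> \<le> norm z + norm z * B" using dd(2)[OF \<open>norm z < d\<close>] B(2)[of z] by linarith
    finally show "norm (F z) \<le> (B + 1) * norm z" by (simp add: algebra_simps)
  qed
  then show ?thesis using dd B by (intro exI[of _ "d/2"] conjI exI[of _ "B + 1"]) auto
qed

lemma cl_field_props:
  fixes f :: "real^'n \<Rightarrow> real^'m \<Rightarrow> real^'n"
    and g :: "real^'n \<Rightarrow> real^'m \<Rightarrow> real^'l^'n"
    and k :: "real^'l \<Rightarrow> real^'n \<Rightarrow> real^'m"
  assumes f_smooth: "smooth (\<lambda>(x, u). f x u)" and f0: "f 0 0 = 0"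
    and g_smooth: "smooth (\<lambda>(x, u). g x u)" and g0: "g 0 0 = 0"
    and k_smooth: "smooth (\<lambda>(\<eta>, x). k \<eta> x)" and k0: "k \<eta> 0 = 0"
  shows "\<exists>\<delta>>0. \<exists>L\<ge>0. \<forall>z. norm z \<le> \<delta> \<longrightarrow> norm (cl_field f g k \<eta> \<theta> z) \<le> L * norm z"
proof (rule lin_bound_at0)
  let ?hf = "\<lambda>(x, u). f x u" and ?hg = "\<lambda>(x, u). g x u" and ?hk = "\<lambda>(\<eta>, x). k \<eta> x"
  have P: "(\<lambda>z. (z, ?hk (\<eta>, z))) differentiable (at z)" for z
  proof -
    have "(\<lambda>z. (\<eta>, z)) differentiable (at z)" by (auto intro!: derivative_intros simp: differentiable_def)
    then have "(?hk \<circ> (\<lambda>z. (\<eta>, z))) differentiable (at z)"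
      by (rule differentiable_chain_at) (rule smooth_has_derivative(1)[OF k_smooth])
    then show ?thesis
      by (auto intro!: differentiable_Pair simp: o_def)
  qed
  have "(?hf \<circ> (\<lambda>z. (z, ?hk (\<eta>, z)))) differentiable (at 0)"
    by (rule differentiable_chain_at[OF P smooth_has_derivative(1)[OF f_smooth]])
  moreover have "(?hg \<circ> (\<lambda>z. (z, ?hk (\<eta>, z)))) differentiable (at 0)"
    by (rule differentiable_chain_at[OF P smooth_has_derivative(1)[OF g_smooth]])
  then have "((\<lambda>M. M *v \<theta>) \<circ> (?hg \<circ> (\<lambda>z. (z, ?hk (\<eta>, z))))) differentiable (at 0)"
    by (rule differentiable_chain_at) (simp add: bounded_linear_imp_differentiable bl_mv)
  ultimately have "(\<lambda>z. (?hf \<circ> (\<lambda>z. (z, ?hk (\<eta>, z)))) z + ((\<lambda>M. M *v \<theta>) \<circ> (?hg \<circ> (\<lambda>z. (z, ?hk (\<eta>, z))))) z) differentiable (at 0)"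
    by (rule differentiable_add)
  then show "cl_field f g k \<eta> \<theta> differentiable (at 0)"
    by (simp add: cl_field_def[abs_def] o_def)
  show "cl_field f g k \<eta> \<theta> 0 = 0" using f0 g0 k0 by (simp add: cl_field_def)
qed


lemma bilin_mm: "bilinear (\<lambda>(A::real^'a^'b) (B::real^'c^'a). A ** B)"
  unfolding bilinear_def
  by (auto intro!: linearI simp: matrix_matrix_mult_def vec_eq_iff sum.distrib algebra_simps sum_distrib_left)

lemma bl_transpose: "bounded_linear (transpose :: real^'a^'b \<Rightarrow> real^'b^'a)"
  unfolding linear_conv_bounded_linear[symmetric]
  by (rule linearI) (simp_all add: transpose_def vec_eq_iff)

lemma cont2:
  assumes "continuous_on UNIV (\<lambda>(x, u). h x u)" "continuous_on S p" "continuous_on S q"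
  shows "continuous_on S (\<lambda>s. h (p s) (q s))"
proof -
  have "continuous_on S (\<lambda>s. (p s, q s))" using assms(2,3) by (rule continuous_on_Pair)
  from continuous_on_compose2[OF assms(1) this] show ?thesis by auto
qed

lemma mm_cont:
  fixes A :: "'d::t2_space \<Rightarrow> real^'a^'b" and B :: "'d \<Rightarrow> real^'c^'a"
  assumes "continuous_on S A" "continuous_on S B"
  shows "continuous_on S (\<lambda>s. A s ** B s)"
  using bilinear_continuous_on_compose[OF assms bilin_mm] by simp

lemma tr_cont:
  fixes A :: "'d::topological_space \<Rightarrow> real^'a^'b"
  assumes "continuous_on S A"
  shows "continuous_on S (\<lambda>s. transpose (A s))"
  using bounded_linear.continuous_on[OF bl_transpose assms] .


locale hyb =
  fixes f :: "real^'n \<Rightarrow> real^'m \<Rightarrow> real^'n"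
    and g :: "real^'n \<Rightarrow> real^'m \<Rightarrow> real^'l^'n"
    and k :: "real^'l \<Rightarrow> real^'n \<Rightarrow> real^'m"
    and V Q :: "real^'l \<Rightarrow> real^'n \<Rightarrow> real"
    and a :: "real^'n \<Rightarrow> real" and T :: real and Nt :: nat and \<theta> :: "real^'l"
    and \<tau> :: "nat \<Rightarrow> real" and x :: "real \<Rightarrow> real^'n" and th :: "real \<Rightarrow> real^'l"
  assumes hs: "hybrid_sol f g k V Q a T Nt \<theta> \<tau> x th"
    and fc: "continuous_on UNIV (\<lambda>(x, u). f x u)"
    and gc: "continuous_on UNIV (\<lambda>(x, u). g x u)"
    and kc: "continuous_on UNIV (\<lambda>(\<eta>, x). k \<eta> x)"
    and Tp: "T > 0" and Nt1: "Nt \<ge> 1"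
    and VQ: "\<And>\<eta> y. V \<eta> y \<le> Q \<eta> y"
    and Vc: "\<And>\<eta>. continuous_on UNIV (V \<eta>)"
    and apd: "\<And>y. y \<noteq> 0 \<Longrightarrow> a y > 0"
    and lip: "\<And>\<eta>. \<exists>\<delta>>0. \<exists>L\<ge>0. \<forall>z. norm z \<le> \<delta> \<longrightarrow> norm (cl_field f g k \<eta> \<theta> z) \<le> L * norm z"
begin

lemmas hsd = hs[unfolded hybrid_sol_def]
lemma tau0: "\<tau> 0 = 0" using hsd[THEN conjunct1] .
lemma unb: "t \<ge> 0 \<Longrightarrow> \<exists>i. t < \<tau> i" using hsd[THEN conjunct2, THEN conjunct1] by blast
lemma step: "\<tau> (Suc i) =
       (if x (\<tau> i) = 0 then \<tau> i + T
        else (let S = {t. t > \<tau> i \<and> V (th (\<tau> i)) (x t) = Q (th (\<tau> i)) (x (\<tau> i)) + a (x (\<tau> i))}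
              in if S = {} then \<tau> i + T else min (\<tau> i + T) (Inf S)))"
  using hsd[THEN conjunct2, THEN conjunct2, THEN conjunct1, rule_format, of i] .
lemma thc: "t \<in> {\<tau> i..<\<tau> (Suc i)} \<Longrightarrow> th t = th (\<tau> i)"
  using hsd[THEN conjunct2, THEN conjunct2, THEN conjunct2, THEN conjunct1, rule_format] .
lemma xc: "continuous_on {0..} x"
  using hsd[THEN conjunct2, THEN conjunct2, THEN conjunct2, THEN conjunct2, THEN conjunct1] .
lemma xd: "t \<in> {\<tau> i..<\<tau> (Suc i)} \<Longrightarrow>
  (x has_vector_derivative cl_field f g k (th (\<tau> i)) \<theta> (x t)) (at t within {\<tau> i..\<tau> (Suc i)})"
  using hsd[THEN conjunct2, THEN conjunct2, THEN conjunct2, THEN conjunct2, THEN conjunct2, THEN conjunct1, rule_format] .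
lemmas upd = hsd[THEN conjunct2, THEN conjunct2, THEN conjunct2, THEN conjunct2, THEN conjunct2, THEN conjunct2, rule_format]

definition "lev i = Q (th (\<tau> i)) (x (\<tau> i)) + a (x (\<tau> i))"
definition "Sset i = {t. t > \<tau> i \<and> V (th (\<tau> i)) (x t) = lev i}"

lemma step': "\<tau> (Suc i) = (if x (\<tau> i) = 0 \<or> Sset i = {} then \<tau> i + T else min (\<tau> i + T) (Inf (Sset i)))"
proof -
  have eq: "{t. t > \<tau> i \<and> V (th (\<tau> i)) (x t) = Q (th (\<tau> i)) (x (\<tau> i)) + a (x (\<tau> i))} = Sset i"
    by (simp add: Sset_def lev_def)
  show ?thesis using step[of i] unfolding Let_def eq by simp
qed

lemma step_le: "\<tau> i \<le> \<tau> (Suc i) \<and> \<tau> (Suc i) \<le> \<tau> i + T"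
proof -
  have "\<tau> i \<le> Inf (Sset i)" if "Sset i \<noteq> {}"
    using that by (intro cInf_greatest) (auto simp: Sset_def)
  then show ?thesis using Tp by (auto simp: step')
qed

lemma tau_mono: "i \<le> j \<Longrightarrow> \<tau> i \<le> \<tau> j"
proof (induction j rule: dec_induct)
  case base then show ?case by simp
next
  case (step j) then show ?case using step_le[of j] by linarith
qed

lemma tau_nonneg: "\<tau> i \<ge> 0" using tau_mono[of 0 i] tau0 by simp

lemma tau_le: "\<tau> i \<le> real i * T"
proof (induction i)
  case 0 then show ?case using tau0 by simp
next
  case (Suc i) then show ?case using step_le[of i] by (simp add: algebra_simps)
qed

lemma tau_mono_rev: "\<tau> i < \<tau> j \<Longrightarrow> i < j"
  using tau_mono[of j i] by (cases "j \<le> i") auto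

lemma xcont_at: "t \<ge> 0 \<Longrightarrow> continuous (at t within {0..}) x"
  using xc by (simp add: continuous_on_eq_continuous_within)

lemma Vx_cont: "continuous_on {0..} (\<lambda>t. V \<eta> (x t))"
  using continuous_on_compose2[OF Vc xc] by auto

lemma V_lt_lev: "x (\<tau> i) \<noteq> 0 \<Longrightarrow> V (th (\<tau> i)) (x (\<tau> i)) < lev i"
  using VQ[of "th (\<tau> i)" "x (\<tau> i)"] apd[of "x (\<tau> i)"] by (simp add: lev_def)

lemma step_strict: "\<tau> i < \<tau> (Suc i)"
proof (cases "x (\<tau> i) = 0 \<or> Sset i = {}")
  case True then show ?thesis using Tp by (simp add: step')
next
  case False
  then have nz: "x (\<tau> i) \<noteq> 0" and ne: "Sset i \<noteq> {}" by auto
  let ?\<phi> = "\<lambda>t. V (th (\<tau> i)) (x t)"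
  have "continuous (at (\<tau> i) within {0..}) ?\<phi>"
    using Vx_cont tau_nonneg by (simp add: continuous_on_eq_continuous_within)
  moreover have "lev i - ?\<phi> (\<tau> i) > 0" using V_lt_lev[OF nz] by simp
  ultimately obtain e where e: "e > 0" "\<And>t. t \<in> {0..} \<Longrightarrow> dist t (\<tau> i) < e \<Longrightarrow> dist (?\<phi> t) (?\<phi> (\<tau> i)) < lev i - ?\<phi> (\<tau> i)"
    unfolding continuous_within_eps_delta by metis
  have "\<tau> i + e \<le> Inf (Sset i)"
  proof (rule cInf_greatest[OF ne])
    fix t assume t: "t \<in> Sset i"
    then have t1: "t > \<tau> i" "?\<phi> t = lev i" by (auto simp: Sset_def)
    show "\<tau> i + e \<le> t"
    proof (rule ccontr)
      assume "\<not> \<tau> i + e \<le> t"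
      then have "dist t (\<tau> i) < e" using t1 by (simp add: dist_real_def)
      from e(2)[OF _ this] t1 tau_nonneg[of i] show False by (simp add: dist_real_def)
    qed
  qed
  then show ?thesis using e Tp False by (simp add: step')
qed

lemma tau_strict: "i < j \<Longrightarrow> \<tau> i < \<tau> j"
proof (induction j)
  case 0 then show ?case by simp
next
  case (Suc j)
  show ?case
  proof (cases "i = j")
    case True then show ?thesis using step_strict by simp
  next
    case False then have "i < j" using Suc by simp
    then show ?thesis using Suc.IH step_strict[of j] by simp
  qed
qed

lemma find_piece: assumes "t \<ge> 0" shows "\<exists>j. \<tau> j \<le> t \<and> t < \<tau> (Suc j)"
proof -
  obtain i where i: "t < \<tau> i" using unb[OF assms] by blast
  define m where "m = (LEAST i. t < \<tau> i)"
  have m: "t < \<tau> m" unfolding m_def by (rule LeastI[of _ i]) (rule i)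
  have "m \<noteq> 0"
  proof
    assume "m = 0" then show False using m tau0 assms by simp
  qed
  then obtain j where j: "m = Suc j" using not0_implies_Suc by blast
  have "\<not> t < \<tau> j" using not_less_Least[of j "\<lambda>i. t < \<tau> i"] j unfolding m_def by auto
  then show ?thesis using m j by (intro exI[of _ j]) auto
qed

lemma piece_unique: "\<tau> j \<le> t \<Longrightarrow> t < \<tau> (Suc j) \<Longrightarrow> \<tau> i \<le> t \<Longrightarrow> t < \<tau> (Suc i) \<Longrightarrow> i = j"
proof (rule ccontr)
  assume h: "\<tau> j \<le> t" "t < \<tau> (Suc j)" "\<tau> i \<le> t" "t < \<tau> (Suc i)" "i \<noteq> j"
  show False
  proof (cases "i < j")
    case True then have "\<tau> (Suc i) \<le> \<tau> j" by (intro tau_mono) simp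
    then show False using h by simp
  next
    case False then have "j < i" using h by simp
    then have "\<tau> (Suc j) \<le> \<tau> i" by (intro tau_mono) simp
    then show False using h by simp
  qed
qed

lemma level_bound:
  assumes nz: "x (\<tau> i) \<noteq> 0" and t: "t \<in> {\<tau> i..\<tau> (Suc i)}"
  shows "V (th (\<tau> i)) (x t) \<le> lev i"
proof (rule ccontr)
  let ?\<phi> = "\<lambda>t. V (th (\<tau> i)) (x t)"
  assume "\<not> ?\<phi> t \<le> lev i"
  then have gt: "?\<phi> t > lev i" by simp
  have "continuous_on {\<tau> i..t} ?\<phi>" by (rule continuous_on_subset[OF Vx_cont]) (use tau_nonneg[of i] in auto)
  then obtain s where s: "\<tau> i \<le> s" "s \<le> t" "?\<phi> s = lev i"
    using IVT'[of ?\<phi> "\<tau> i" "lev i" t] V_lt_lev[OF nz] gt t by auto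
  have s1: "s > \<tau> i" using s V_lt_lev[OF nz] by (cases "s = \<tau> i") auto
  have sS: "s \<in> Sset i" using s s1 by (simp add: Sset_def)
  then have ne: "Sset i \<noteq> {}" by auto
  have "Inf (Sset i) \<le> s" using sS by (intro cInf_lower) (auto simp: Sset_def bdd_below_def intro!: exI[of _ "\<tau> i"])
  moreover have "t \<le> Inf (Sset i)" using t nz ne by (simp add: step')
  moreover have "s \<noteq> t" using s gt by auto
  ultimately show False using s by linarith
qed

end


context hyb begin

definition "wF s = g (x s) (k (th s) (x s))"
definition "eF s = f (x s) (k (th s) (x s))"
definition "wj j s = g (x s) (k (th (\<tau> j)) (x s))"
definition "ej j s = f (x s) (k (th (\<tau> j)) (x s))"

lemma kx_cont: "continuous_on {0..} (\<lambda>s. k \<eta> (x s))"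
  using cont2[of k "{0..}" "\<lambda>s. \<eta>" x] kc xc by (auto simp: continuous_on_const)

lemma wj_cont: "continuous_on {0..} (wj j)"
  unfolding wj_def[abs_def] using cont2[OF gc xc kx_cont] .

lemma ej_cont: "continuous_on {0..} (ej j)"
  unfolding ej_def[abs_def] using cont2[OF fc xc kx_cont] .

lemma wF_piece: "s \<in> {\<tau> j..<\<tau> (Suc j)} \<Longrightarrow> wF s = wj j s"
  using thc by (simp add: wF_def wj_def)
lemma eF_piece: "s \<in> {\<tau> j..<\<tau> (Suc j)} \<Longrightarrow> eF s = ej j s"
  using thc by (simp add: eF_def ej_def)

lemma piecewise_integrable:
  fixes h :: "real \<Rightarrow> 'b::euclidean_space"
  assumes hc: "\<And>j. continuous_on {0..} (hj j)" and he: "\<And>j s. s \<in> {\<tau> j..<\<tau> (Suc j)} \<Longrightarrow> h s = hj j s"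
    and a0: "0 \<le> a'"
  shows "h integrable_on {a'..b'}"
proof -
  have p: "h integrable_on {\<tau> j..\<tau> (Suc j)}" for j
  proof (rule integrable_spike_finite[of "{\<tau> (Suc j)}"])
    show "hj j integrable_on {\<tau> j..\<tau> (Suc j)}"
      by (rule integrable_continuous_real, rule continuous_on_subset[OF hc]) (use tau_nonneg in auto)
  qed (use he in auto)
  have n: "h integrable_on {0..\<tau> n}" for n
  proof (induction n)
    case 0 then show ?case using tau0 integrable_on_refl[of h 0] by simp
  next
    case (Suc n)
    show ?case by (rule Henstock_Kurzweil_Integration.integrable_combine[OF tau_nonneg step_le[THEN conjunct1] Suc p])
  qed
  show ?thesis
  proof (cases "a' \<le> b'")
    case False then show ?thesis by (simp add: integrable_on_empty)
  next
    case True
    obtain n where "b' < \<tau> n" using unb[of b'] True a0 by auto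
    then show ?thesis using a0 by (intro integrable_subinterval_real[OF n[of n]]) auto
  qed
qed

lemma wF_int: "0 \<le> a' \<Longrightarrow> wF integrable_on {a'..b'}"
  by (rule piecewise_integrable[OF wj_cont wF_piece])
lemma eF_int: "0 \<le> a' \<Longrightarrow> eF integrable_on {a'..b'}"
  by (rule piecewise_integrable[OF ej_cont eF_piece])

lemma xd_at: "\<tau> j < s \<Longrightarrow> s < \<tau> (Suc j) \<Longrightarrow>
  (x has_vector_derivative cl_field f g k (th (\<tau> j)) \<theta> (x s)) (at s)"
proof -
  assume s: "\<tau> j < s" "s < \<tau> (Suc j)"
  have "s \<in> interior {\<tau> j..\<tau> (Suc j)}" using s by simp
  from at_within_interior[OF this] xd[of s j] s show ?thesis by simp
qed

lemma ftc:
  assumes "0 \<le> \<sigma>" "\<sigma> \<le> t"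
  shows "((\<lambda>s. eF s + wF s *v \<theta>) has_integral (x t - x \<sigma>)) {\<sigma>..t}"
proof -
  obtain I where I: "t < \<tau> I" using unb[of t] assms by auto
  show ?thesis
  proof (rule fundamental_theorem_of_calculus_interior_strong[of "\<tau> ` {..I}"])
    show "finite (\<tau> ` {..I})" by simp
    show "\<sigma> \<le> t" by fact
    show "continuous_on {\<sigma>..t} x" by (rule continuous_on_subset[OF xc]) (use assms in auto)
    fix s assume s: "s \<in> {\<sigma><..<t} - \<tau> ` {..I}"
    then obtain j where j: "\<tau> j \<le> s" "s < \<tau> (Suc j)" using find_piece[of s] assms by auto
    have "j < I" using tau_mono_rev[of j I] j s I by auto
    then have "\<tau> j \<noteq> s" using s by auto
    then have "\<tau> j < s" using j by simp
    from xd_at[OF this j(2)] show "(x has_vector_derivative eF s + wF s *v \<theta>) (at s)"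
      using wF_piece[of s j] eF_piece[of s j] j by (simp add: cl_field_def wj_def ej_def)
  qed
qed

lemma ftc_split:
  assumes "0 \<le> \<sigma>" "\<sigma> \<le> t"
  shows "x t - x \<sigma> = integral {\<sigma>..t} eF + integral {\<sigma>..t} wF *v \<theta>"
proof -
  have i1: "eF integrable_on {\<sigma>..t}" "wF integrable_on {\<sigma>..t}" using eF_int wF_int assms by auto
  have i2: "((\<lambda>M. M *v \<theta>) \<circ> wF) integrable_on {\<sigma>..t}" by (rule integrable_linear[OF i1(2) bl_mv])
  have "x t - x \<sigma> = integral {\<sigma>..t} (\<lambda>s. eF s + wF s *v \<theta>)"
    using ftc[OF assms] by (simp add: integral_unique)
  also have "\<dots> = integral {\<sigma>..t} eF + integral {\<sigma>..t} ((\<lambda>M. M *v \<theta>) \<circ> wF)"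
    using integral_add[OF i1(1) i2] by (simp add: o_def)
  also have "integral {\<sigma>..t} ((\<lambda>M. M *v \<theta>) \<circ> wF) = integral {\<sigma>..t} wF *v \<theta>"
    by (rule integral_linear[OF i1(2) bl_mv])
  finally show ?thesis .
qed

lemma p_eq_q:
  assumes "0 \<le> \<sigma>" "0 \<le> t"
  shows "x t - x \<sigma> - sint \<sigma> t eF = sint \<sigma> t wF *v \<theta>"
proof (cases "\<sigma> \<le> t")
  case True then show ?thesis using ftc_split[OF assms(1) True] by (simp add: sint_def)
next
  case False
  then have "t \<le> \<sigma>" by simp
  from ftc_split[OF assms(2) this]
  have e: "x \<sigma> - x t = integral {t..\<sigma>} eF + integral {t..\<sigma>} wF *v \<theta>" .
  have n: "(- integral {t..\<sigma>} wF) *v \<theta> = - (integral {t..\<sigma>} wF *v \<theta>)"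
    using matrix_vector_mult_diff_rdistrib[of 0 "integral {t..\<sigma>} wF" \<theta>] by simp
  show ?thesis using False e n by (simp add: sint_def algebra_simps)
qed

definition "W t = integral {0..t} wF"

lemma sint_W: assumes "0 \<le> \<sigma>" "0 \<le> t" shows "sint \<sigma> t wF = W t - W \<sigma>"
proof (cases "\<sigma> \<le> t")
  case True
  have "integral {0..\<sigma>} wF + integral {\<sigma>..t} wF = integral {0..t} wF"
    by (rule Henstock_Kurzweil_Integration.integral_combine[OF assms(1) True wF_int]) simp
  then show ?thesis using True by (simp add: sint_def W_def algebra_simps)
next
  case False
  have "integral {0..t} wF + integral {t..\<sigma>} wF = integral {0..\<sigma>} wF"
    using False by (intro Henstock_Kurzweil_Integration.integral_combine[OF assms(2) _ wF_int]) auto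
  then show ?thesis using False by (simp add: sint_def W_def algebra_simps)
qed

lemma W_cont: "continuous_on {0..b} W"
  unfolding W_def[abs_def] by (rule indefinite_integral_continuous_1[OF wF_int]) simp

end


lemma cont_slice:
  assumes "continuous_on (A \<times> B) (\<lambda>(t, \<sigma>). M t \<sigma>)" "t \<in> A"
  shows "continuous_on B (M t)"
proof -
  have "continuous_on B (\<lambda>\<sigma>. (t, \<sigma>))" by (intro continuous_intros)
  from continuous_on_compose2[OF assms(1) this] assms(2) show ?thesis by auto
qed

lemma outer_cont:
  fixes M :: "real \<Rightarrow> real \<Rightarrow> 'a::euclidean_space"
  assumes "continuous_on ({c..d} \<times> {c..d}) (\<lambda>(t, \<sigma>). M t \<sigma>)"
  shows "continuous_on {c..d} (\<lambda>t. integral {c..d} (M t))"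
  using integral_continuous_on_param[of "{c..d}" c d M] assms by (simp add: cbox_interval)

lemma double_int_linear:
  fixes M :: "real \<Rightarrow> real \<Rightarrow> 'a::euclidean_space" and L :: "'a \<Rightarrow> 'b::euclidean_space"
  assumes Mc: "continuous_on ({c..d} \<times> {c..d}) (\<lambda>(t, \<sigma>). M t \<sigma>)" and L: "bounded_linear L"
  shows "integral {c..d} (\<lambda>t. integral {c..d} (\<lambda>\<sigma>. L (M t \<sigma>))) = L (integral {c..d} (\<lambda>t. integral {c..d} (M t)))"
proof -
  have "integral {c..d} (\<lambda>t. integral {c..d} (\<lambda>\<sigma>. L (M t \<sigma>))) = integral {c..d} (\<lambda>t. L (integral {c..d} (M t)))"
  proof (rule integral_cong)
    fix t assume t: "t \<in> {c..d}"
    have "M t integrable_on {c..d}" using cont_slice[OF Mc t] by (rule integrable_continuous_real)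
    from integral_linear[OF this L] show "integral {c..d} (\<lambda>\<sigma>. L (M t \<sigma>)) = L (integral {c..d} (M t))"
      by (simp add: o_def)
  qed
  also have "\<dots> = L (integral {c..d} (\<lambda>t. integral {c..d} (M t)))"
  proof -
    have "(\<lambda>t. integral {c..d} (M t)) integrable_on {c..d}"
      by (rule integrable_continuous_real[OF outer_cont[OF Mc]])
    from integral_linear[OF this L] show ?thesis by (simp add: o_def)
  qed
  finally show ?thesis .
qed

lemma double_int_zero:
  fixes h :: "real \<Rightarrow> real \<Rightarrow> real"
  assumes hc: "continuous_on ({c..d} \<times> {c..d}) (\<lambda>(t, \<sigma>). h t \<sigma>)" and h0: "\<And>t \<sigma>. h t \<sigma> \<ge> 0"
    and cd: "c < d" and z: "integral {c..d} (\<lambda>t. integral {c..d} (h t)) = 0"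
    and t: "t \<in> {c..d}" and s: "\<sigma> \<in> {c..d}"
  shows "h t \<sigma> = 0"
proof -
  let ?H = "\<lambda>t. integral {c..d} (h t)"
  have Hc: "continuous_on {c..d} ?H" by (rule outer_cont[OF hc])
  have hint: "h t' integrable_on {c..d}" if "t' \<in> {c..d}" for t'
    using cont_slice[OF hc that] by (rule integrable_continuous_real)
  have H0: "?H t' \<ge> 0" if "t' \<in> {c..d}" for t'
    using hint[OF that] h0 by (intro integral_nonneg) auto
  have "(?H has_integral 0) {c..d}"
    using z integrable_continuous_real[OF Hc] by (metis has_integral_integral)
  then have "?H t = 0"
    using has_integral_0_cbox_imp_0[of c d ?H t] Hc H0 cd t by (auto simp: cbox_interval box_real)
  then have "(h t has_integral 0) {c..d}" using hint[OF t] by (metis has_integral_integral)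
  then show ?thesis
    using has_integral_0_cbox_imp_0[of c d "h t" \<sigma>] cont_slice[OF hc t] h0 cd s by (auto simp: cbox_interval box_real)
qed

context hyb begin

definition "mu i = Min {\<tau> j | j. j \<le> i \<and> \<tau> j \<ge> \<tau> (Suc i) - real Nt * T}"
definition "Gm i = integral {mu i..\<tau> (Suc i)} (\<lambda>t. integral {mu i..\<tau> (Suc i)}
                    (\<lambda>\<sigma>. transpose (sint \<sigma> t wF) ** sint \<sigma> t wF))"
definition "Zm i = integral {mu i..\<tau> (Suc i)} (\<lambda>t. integral {mu i..\<tau> (Suc i)}
                    (\<lambda>\<sigma>. transpose (sint \<sigma> t wF) *v (x t - x \<sigma> - sint \<sigma> t eF)))"

lemma upd_i: "Gm i *v th (\<tau> (Suc i)) = Zm i \<and>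
  (\<forall>\<eta>. Gm i *v \<eta> = Zm i \<longrightarrow> (norm (th (\<tau> (Suc i)) - th (\<tau> i)))\<^sup>2 \<le> (norm (\<eta> - th (\<tau> i)))\<^sup>2)"
  using upd[of i] unfolding Let_def Gm_def Zm_def mu_def wF_def[abs_def] eF_def[abs_def] .

lemma mu_facts: "\<exists>j\<le>i. mu i = \<tau> j" "\<And>j. j \<le> i \<Longrightarrow> \<tau> j \<ge> \<tau> (Suc i) - real Nt * T \<Longrightarrow> mu i \<le> \<tau> j"
proof -
  let ?S = "{\<tau> j | j. j \<le> i \<and> \<tau> j \<ge> \<tau> (Suc i) - real Nt * T}"
  have fin: "finite ?S" by simp
  have "real Nt * T \<ge> T" using Nt1 Tp by simp
  then have "\<tau> i \<in> ?S" using step_le[of i] by auto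
  then have ne: "?S \<noteq> {}" by auto
  from Min_in[OF fin ne] show "\<exists>j\<le>i. mu i = \<tau> j" unfolding mu_def by auto
  fix j assume "j \<le> i" "\<tau> j \<ge> \<tau> (Suc i) - real Nt * T"
  then have "\<tau> j \<in> ?S" by auto
  from Min_le[OF fin this] show "mu i \<le> \<tau> j" unfolding mu_def .
qed

lemma mu_range: "0 \<le> mu i" "mu i < \<tau> (Suc i)"
proof -
  obtain j where j: "j \<le> i" "mu i = \<tau> j" using mu_facts(1) by blast
  show "0 \<le> mu i" using j tau_nonneg by simp
  show "mu i < \<tau> (Suc i)" using j tau_strict[of j "Suc i"] by simp
qed

definition "Mq t \<sigma> = transpose (W t - W \<sigma>) ** (W t - W \<sigma>)"

lemma Wd_cont: "continuous_on ({0..b} \<times> {0..b}) (\<lambda>(t, \<sigma>). W t - W \<sigma>)"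
proof -
  have "continuous_on ({0..b} \<times> {0..b}) (\<lambda>p. W (fst p))"
    by (rule continuous_on_compose2[OF W_cont continuous_on_fst]) auto
  moreover have "continuous_on ({0..b} \<times> {0..b}) (\<lambda>p. W (snd p))"
    by (rule continuous_on_compose2[OF W_cont continuous_on_snd]) auto
  ultimately have "continuous_on ({0..b} \<times> {0..b}) (\<lambda>p. W (fst p) - W (snd p))"
    by (rule continuous_on_diff)
  then show ?thesis by (simp add: case_prod_unfold)
qed

lemma Wd_cont': "0 \<le> c \<Longrightarrow> continuous_on ({c..d} \<times> {c..d}) (\<lambda>(t, \<sigma>). W t - W \<sigma>)"
  by (rule continuous_on_subset[OF Wd_cont[of d]]) auto

lemma Mq_cont: "0 \<le> c \<Longrightarrow> continuous_on ({c..d} \<times> {c..d}) (\<lambda>(t, \<sigma>). Mq t \<sigma>)"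
  unfolding Mq_def[abs_def] using mm_cont[OF tr_cont[OF Wd_cont'] Wd_cont'] by (simp add: case_prod_unfold)

lemma Gm_eq: "Gm i = integral {mu i..\<tau> (Suc i)} (\<lambda>t. integral {mu i..\<tau> (Suc i)} (Mq t))"
  unfolding Gm_def
proof (intro integral_cong)
  fix t \<sigma> assume "t \<in> {mu i..\<tau> (Suc i)}" "\<sigma> \<in> {mu i..\<tau> (Suc i)}"
  then have "0 \<le> t" "0 \<le> \<sigma>" using mu_range[of i] by auto
  then show "transpose (sint \<sigma> t wF) ** sint \<sigma> t wF = Mq t \<sigma>" by (simp add: sint_W Mq_def)
qed

lemma Zm_eq: "Zm i = Gm i *v \<theta>"
proof -
  have "Zm i = integral {mu i..\<tau> (Suc i)} (\<lambda>t. integral {mu i..\<tau> (Suc i)} (\<lambda>\<sigma>. Mq t \<sigma> *v \<theta>))"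
    unfolding Zm_def
  proof (intro integral_cong)
    fix t \<sigma> assume "t \<in> {mu i..\<tau> (Suc i)}" "\<sigma> \<in> {mu i..\<tau> (Suc i)}"
    then have "0 \<le> t" "0 \<le> \<sigma>" using mu_range[of i] by auto
    then show "transpose (sint \<sigma> t wF) *v (x t - x \<sigma> - sint \<sigma> t eF) = Mq t \<sigma> *v \<theta>"
      by (simp add: p_eq_q sint_W Mq_def matrix_vector_mul_assoc)
  qed
  also have "\<dots> = Gm i *v \<theta>"
    unfolding Gm_eq by (rule double_int_linear[OF Mq_cont bl_mv]) (rule mu_range)
  finally show ?thesis .
qed

lemma th_step: "norm (th (\<tau> (Suc i)) - th (\<tau> i)) \<le> norm (\<theta> - th (\<tau> i))"
proof -
  have "(norm (th (\<tau> (Suc i)) - th (\<tau> i)))\<^sup>2 \<le> (norm (\<theta> - th (\<tau> i)))\<^sup>2"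
    using upd_i[of i] Zm_eq[of i] by auto
  then show ?thesis by (simp add: power2_le_iff_abs_le)
qed

lemma th_stay: "th (\<tau> i) = \<theta> \<Longrightarrow> th (\<tau> (Suc i)) = \<theta>"
  using th_step[of i] by simp

lemma th_stay_all: assumes "th (\<tau> i) = \<theta>" "i \<le> j" shows "th (\<tau> j) = \<theta>"
  using assms(2)
proof (induction j rule: dec_induct)
  case base then show ?case using assms(1) .
next
  case (step j) then show ?case using th_stay by blast
qed

lemma th_bound: "norm (th (\<tau> i) - \<theta>) \<le> 2 ^ i * norm (th 0 - \<theta>)"
proof (induction i)
  case 0 then show ?case using tau0 by simp
next
  case (Suc i)
  have "norm (th (\<tau> (Suc i)) - \<theta>) \<le> norm (th (\<tau> (Suc i)) - th (\<tau> i)) + norm (th (\<tau> i) - \<theta>)"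
    using norm_triangle_ineq[of "th (\<tau> (Suc i)) - th (\<tau> i)" "th (\<tau> i) - \<theta>"] by simp
  also have "\<dots> \<le> 2 * norm (th (\<tau> i) - \<theta>)" using th_step[of i] by (simp add: norm_minus_commute)
  also have "\<dots> \<le> 2 * (2 ^ i * norm (th 0 - \<theta>))" using Suc by simp
  finally show ?case by simp
qed

end


context hyb begin

lemma quad_form: "dd \<bullet> (Mq t \<sigma> *v dd) = (norm ((W t - W \<sigma>) *v dd))\<^sup>2"
proof -
  let ?A = "W t - W \<sigma>"
  have "Mq t \<sigma> *v dd = transpose ?A *v (?A *v dd)" by (simp only: Mq_def matrix_vector_mul_assoc)
  also have "\<dots> = (?A *v dd) v* ?A" by simp
  finally have "dd \<bullet> (Mq t \<sigma> *v dd) = ((?A *v dd) v* ?A) \<bullet> dd" by (simp add: inner_commute)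
  also have "\<dots> = (?A *v dd) \<bullet> (?A *v dd)" by (rule dot_lmul_matrix)
  finally show ?thesis by (simp add: power2_norm_eq_inner)
qed

lemma kernel_W:
  assumes G0: "Gm i *v dd = 0" and t: "t \<in> {mu i..\<tau> (Suc i)}" and s: "\<sigma> \<in> {mu i..\<tau> (Suc i)}"
  shows "(W t - W \<sigma>) *v dd = 0"
proof -
  let ?c = "mu i" and ?d = "\<tau> (Suc i)"
  have c0: "0 \<le> ?c" and cd: "?c < ?d" using mu_range by auto
  have L: "bounded_linear (\<lambda>A. dd \<bullet> (A *v dd))"
    by (rule bounded_linear_compose[OF bounded_linear_inner_right bl_mv])
  have "integral {?c..?d} (\<lambda>t. integral {?c..?d} (\<lambda>\<sigma>. dd \<bullet> (Mq t \<sigma> *v dd))) = dd \<bullet> (Gm i *v dd)"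
    unfolding Gm_eq by (rule double_int_linear[OF Mq_cont[OF c0] L])
  also have "\<dots> = 0" using G0 by simp
  finally have z: "integral {?c..?d} (\<lambda>t. integral {?c..?d} (\<lambda>\<sigma>. (norm ((W t - W \<sigma>) *v dd))\<^sup>2)) = 0"
    by (simp add: quad_form)
  have hc: "continuous_on ({?c..?d} \<times> {?c..?d}) (\<lambda>(t, \<sigma>). (norm ((W t - W \<sigma>) *v dd))\<^sup>2)"
  proof -
    have "continuous_on ({?c..?d} \<times> {?c..?d}) (\<lambda>p. (norm ((case p of (t, \<sigma>) \<Rightarrow> W t - W \<sigma>) *v dd))\<^sup>2)"
      by (intro continuous_intros bounded_linear.continuous_on[OF bl_mv] Wd_cont'[OF c0])
    then show ?thesis by (simp add: case_prod_unfold)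
  qed
  have "(norm ((W t - W \<sigma>) *v dd))\<^sup>2 = 0"
    by (rule double_int_zero[OF hc _ cd z t s]) simp
  then show ?thesis by simp
qed

lemma kernel:
  assumes G0: "Gm i *v dd = 0" and j: "j \<le> i" "mu i \<le> \<tau> j" and t: "t \<in> {\<tau> j..\<tau> (Suc j)}"
  shows "wj j t *v dd = 0"
proof -
  let ?a = "\<tau> j" and ?b = "\<tau> (Suc j)"
  have ab: "?a < ?b" by (rule step_strict)
  have bd: "?b \<le> \<tau> (Suc i)" using j by (intro tau_mono) simp
  have wc: "continuous_on {?a..?b} (wj j)" by (rule continuous_on_subset[OF wj_cont]) (use tau_nonneg in auto)
  have wc2: "continuous_on {?a..?b} (\<lambda>r. wj j r *v dd)"
    by (rule bounded_linear.continuous_on[OF bl_mv wc])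
  have Phi0: "integral {?a..s} (\<lambda>r. wj j r *v dd) = 0" if s: "s \<in> {?a..?b}" for s
  proof -
    have "integral {?a..s} wF = integral {?a..s} (wj j)"
    proof (rule integral_spike[of "{s}"])
      fix r assume "r \<in> {?a..s} - {s}"
      then have "r \<in> {?a..<?b}" using s by auto
      then show "wj j r = wF r" by (simp add: wF_piece)
    qed simp
    moreover have "integral {?a..s} wF = W s - W ?a"
      using sint_W[of ?a s] s tau_nonneg[of j] by (simp add: sint_def)
    moreover have "(W s - W ?a) *v dd = 0"
      using kernel_W[OF G0, of s ?a] s j bd mu_range[of i] by auto
    moreover have "wj j integrable_on {?a..s}"
      by (rule integrable_continuous_real, rule continuous_on_subset[OF wc]) (use s in auto)
    ultimately show ?thesis using integral_linear[of "wj j" "{?a..s}" "\<lambda>M. M *v dd", OF _ bl_mv]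
      by (simp add: o_def)
  qed
  have d1: "((\<lambda>s. integral {?a..s} (\<lambda>r. wj j r *v dd)) has_vector_derivative (wj j t *v dd)) (at t within {?a..?b})"
    by (rule integral_has_vector_derivative[OF wc2 t])
  have d2: "((\<lambda>s. 0) has_vector_derivative (wj j t *v dd)) (at t within {?a..?b})"
    by (rule has_vector_derivative_transform[OF t _ d1]) (simp add: Phi0)
  have d3: "((\<lambda>s. 0) has_vector_derivative 0) (at t within {?a..?b})"
    by (rule has_vector_derivative_const)
  show ?thesis
    using vector_derivative_unique_within_closed_interval[of ?a ?b t "\<lambda>s. 0" "wj j t *v dd" 0] ab t d2 d3
    by (simp add: cbox_interval)
qed

end


context hyb begin

lemma zero_piece:
  assumes z: "x (\<tau> i) = 0" and t: "t \<in> {\<tau> i..\<tau> (Suc i)}"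
  shows "x t = 0"
proof -
  obtain \<delta> L where dL: "\<delta> > 0" "L \<ge> 0" "\<forall>z. norm z \<le> \<delta> \<longrightarrow> norm (cl_field f g k (th (\<tau> i)) \<theta> z) \<le> L * norm z"
    using lip[of "th (\<tau> i)"] by blast
  have "\<forall>t\<in>{\<tau> i..\<tau> (Suc i)}. x t = 0"
  proof (rule zero_unique[where F = "cl_field f g k (th (\<tau> i)) \<theta>"])
    show "\<And>z. norm z \<le> \<delta> \<Longrightarrow> norm (cl_field f g k (th (\<tau> i)) \<theta> z) \<le> L * norm z" using dL by blast
    show "continuous_on {\<tau> i..\<tau> (Suc i)} x" by (rule continuous_on_subset[OF xc]) (use tau_nonneg in auto)
    show "\<And>t. t \<in> {\<tau> i<..<\<tau> (Suc i)} \<Longrightarrow> (x has_vector_derivative cl_field f g k (th (\<tau> i)) \<theta> (x t)) (at t)"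
      using xd_at by auto
    show "\<tau> i \<le> \<tau> (Suc i)" using step_le by blast
  qed (use dL z in auto)
  then show ?thesis using t by blast
qed

lemma zero_all:
  assumes z: "x 0 = 0" and t: "t \<ge> 0"
  shows "x t = 0"
proof -
  have zi: "x (\<tau> i) = 0" for i
  proof (induction i)
    case 0 then show ?case using z tau0 by simp
  next
    case (Suc i) then show ?case using zero_piece[of i "\<tau> (Suc i)"] step_le[of i] by auto
  qed
  obtain j where "\<tau> j \<le> t" "t < \<tau> (Suc j)" using find_piece[OF t] by blast
  then show ?thesis using zero_piece[OF zi[of j], of t] by auto
qed

lemma piece_bound:
  assumes K1: "K1 > 0" and KA: "K2 + A \<ge> 0"
    and VK: "\<And>y. K1 * (norm y)\<^sup>2 \<le> V (th (\<tau> i)) y"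
    and QK: "\<And>y. Q (th (\<tau> i)) y \<le> K2 * (norm y)\<^sup>2"
    and aA: "\<And>y. a y \<le> A * (norm y)\<^sup>2"
    and t: "t \<in> {\<tau> i..\<tau> (Suc i)}"
  shows "norm (x t) \<le> sqrt ((K2 + A) / K1) * norm (x (\<tau> i))"
proof (cases "x (\<tau> i) = 0")
  case True then show ?thesis using zero_piece[OF True t] by simp
next
  case False
  have "K1 * (norm (x t))\<^sup>2 \<le> V (th (\<tau> i)) (x t)" by (rule VK)
  also have "\<dots> \<le> lev i" by (rule level_bound[OF False t])
  also have "\<dots> \<le> (K2 + A) * (norm (x (\<tau> i)))\<^sup>2"
    unfolding lev_def using QK[of "x (\<tau> i)"] aA[of "x (\<tau> i)"] by (simp add: algebra_simps)
  finally have "(norm (x t))\<^sup>2 \<le> (K2 + A) / K1 * (norm (x (\<tau> i)))\<^sup>2"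
    using K1 by (simp add: field_simps)
  then have "sqrt ((norm (x t))\<^sup>2) \<le> sqrt ((K2 + A) / K1 * (norm (x (\<tau> i)))\<^sup>2)"
    by (rule real_sqrt_le_mono)
  moreover have "sqrt ((K2 + A) / K1 * (norm (x (\<tau> i)))\<^sup>2) = sqrt ((K2 + A) / K1) * norm (x (\<tau> i))"
    by (subst real_sqrt_mult) simp
  ultimately show ?thesis by simp
qed

lemma ident:
  assumes H3: "H3 f g k N" and NN: "Nt > N" and nz: "x 0 \<noteq> 0"
  shows "\<exists>p\<le>N. th (\<tau> p) = \<theta>"
proof (rule ccontr)
  assume "\<not> (\<exists>p\<le>N. th (\<tau> p) = \<theta>)"
  then have ne: "\<forall>i\<le>N. th (\<tau> i) \<noteq> \<theta>" by blast
  define d where "d i = th (\<tau> i) - \<theta>" for i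
  have C1: "\<forall>i<N. \<tau> i < \<tau> (Suc i)" using step_strict by blast
  have C2: "\<forall>i\<le>N. d i \<noteq> 0" using ne by (simp add: d_def)
  have C3: "continuous_on {0..\<tau> N} x" by (rule continuous_on_subset[OF xc]) auto
  have C4: "\<forall>i<N. \<forall>t\<in>{\<tau> i..<\<tau> (Suc i)}.
         (x has_vector_derivative cl_field f g k (\<theta> + d i) \<theta> (x t)) (at t within {\<tau> i..\<tau> (Suc i)})"
    using xd by (simp add: d_def)
  have C5: "\<forall>i<N. \<forall>j\<le>i. \<forall>t\<in>{\<tau> j..\<tau> (Suc j)}. g (x t) (k (\<theta> + d j) (x t)) *v d (Suc i) = 0"
  proof (intro allI impI ballI)
    fix i j t assume i: "i < N" and j: "j \<le> i" and t: "t \<in> {\<tau> j..\<tau> (Suc j)}"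
    have G0: "Gm i *v d (Suc i) = 0"
      using upd_i[of i] Zm_eq[of i] by (simp add: d_def matrix_vector_mult_diff_distrib)
    have "\<tau> (Suc i) \<le> real (Suc i) * T" by (rule tau_le)
    also have "\<dots> \<le> real Nt * T" using i NN Tp by (intro mult_right_mono) auto
    finally have "\<tau> j \<ge> \<tau> (Suc i) - real Nt * T" using tau_nonneg[of j] by simp
    then have "mu i \<le> \<tau> j" using mu_facts(2)[OF j] by blast
    from kernel[OF G0 j this t] show "g (x t) (k (\<theta> + d j) (x t)) *v d (Suc i) = 0"
      by (simp add: d_def wj_def)
  qed
  have "\<forall>t\<in>{0..\<tau> N}. x t = 0"
  proof (rule mp[OF H3[unfolded H3_def, THEN spec[of _ \<tau>], THEN spec[of _ \<theta>], THEN spec[of _ d], THEN spec[of _ x]]])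
    show "\<tau> 0 = 0 \<and> (\<forall>i<N. \<tau> i < \<tau> (Suc i)) \<and> (\<forall>i\<le>N. d i \<noteq> 0) \<and>
      continuous_on {0..\<tau> N} x \<and>
      (\<forall>i<N. \<forall>t\<in>{\<tau> i..<\<tau> (Suc i)}.
         (x has_vector_derivative cl_field f g k (\<theta> + d i) \<theta> (x t)) (at t within {\<tau> i..\<tau> (Suc i)})) \<and>
      (\<forall>i<N. \<forall>j\<le>i. \<forall>t\<in>{\<tau> j..\<tau> (Suc j)}.
         g (x t) (k (\<theta> + d j) (x t)) *v d (Suc i) = 0)"
      using tau0 C1 C2 C3 C4 C5 by (intro conjI)
  qed
  then show False using nz tau_nonneg[of N] by auto
qed

lemma clf_cont: "continuous_on UNIV (cl_field f g k \<eta> \<theta>')"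
proof -
  have k1: "continuous_on UNIV (\<lambda>z. k \<eta> z)"
    using cont2[of k UNIV "\<lambda>z. \<eta>" "\<lambda>z. z"] kc by (auto simp: continuous_on_const continuous_on_id)
  have f1: "continuous_on UNIV (\<lambda>z. f z (k \<eta> z))" using cont2[OF fc continuous_on_id k1] .
  have g1: "continuous_on UNIV (\<lambda>z. g z (k \<eta> z))" using cont2[OF gc continuous_on_id k1] .
  have g2: "continuous_on UNIV (\<lambda>z. g z (k \<eta> z) *v \<theta>')"
    using bounded_linear.continuous_on[OF bl_mv g1] .
  show ?thesis unfolding cl_field_def[abs_def] by (intro continuous_on_add f1 g2)
qed

lemma after_id:
  assumes p: "th (\<tau> p) = \<theta>"
  shows "is_sol (cl_field f g k \<theta> \<theta>) (\<lambda>s. x (\<tau> p + s))"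
proof -
  let ?F = "cl_field f g k \<theta> \<theta>"
  let ?c = "\<tau> p"
  have c0: "0 \<le> ?c" by (rule tau_nonneg)
  have Fx: "continuous_on {0..} (\<lambda>s. ?F (x s))"
    using continuous_on_compose2[OF clf_cont xc] by auto
  have eq: "eF s + wF s *v \<theta> = ?F (x s)" if s: "s \<ge> ?c" for s
  proof -
    obtain j where j: "\<tau> j \<le> s" "s < \<tau> (Suc j)" using find_piece[of s] s c0 by auto
    have "p \<le> j"
    proof (rule ccontr)
      assume "\<not> p \<le> j" then have "\<tau> (Suc j) \<le> ?c" by (intro tau_mono) simp
      then show False using j s by simp
    qed
    then have "th (\<tau> j) = \<theta>" using th_stay_all[OF p] by blast
    then have "th s = \<theta>" using thc[of s j] j by simp
    then show ?thesis by (simp add: eF_def wF_def cl_field_def)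
  qed
  have xint: "x t = x ?c + integral {?c..t} (\<lambda>s. ?F (x s))" if t: "t \<ge> ?c" for t
  proof -
    have "((\<lambda>s. ?F (x s)) has_integral (x t - x ?c)) {?c..t}"
    proof (rule has_integral_spike_finite[where S="{}" and f="\<lambda>s. eF s + wF s *v \<theta>"])
      show "((\<lambda>s. eF s + wF s *v \<theta>) has_integral x t - x ?c) {?c..t}" by (rule ftc[OF c0 t])
      fix s assume "s \<in> {?c..t} - {}"
      then show "?F (x s) = eF s + wF s *v \<theta>" using eq[of s] by simp
    qed simp
    then show ?thesis by (simp add: integral_unique)
  qed
  have dx: "(x has_vector_derivative ?F (x t)) (at t within {?c..})" if t: "t \<ge> ?c" for t
  proof -
    let ?b = "t + 1"
    have Fc: "continuous_on {?c..?b} (\<lambda>s. ?F (x s))" by (rule continuous_on_subset[OF Fx]) (use c0 in auto)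
    have "((\<lambda>u. integral {?c..u} (\<lambda>s. ?F (x s))) has_vector_derivative ?F (x t)) (at t within {?c..?b})"
      by (rule integral_has_vector_derivative[OF Fc]) (use t in auto)
    then have "((\<lambda>u. x ?c + integral {?c..u} (\<lambda>s. ?F (x s))) has_vector_derivative ?F (x t)) (at t within {?c..?b})"
      by (rule has_vector_derivative_eq_rhs[OF has_vector_derivative_add[OF has_vector_derivative_const]]) simp_all
    then have "(x has_vector_derivative ?F (x t)) (at t within {?c..?b})"
    proof (rule has_vector_derivative_transform[rotated 2])
      show "t \<in> {?c..?b}" using t by simp
      fix u assume "u \<in> {?c..?b}"
      then show "x u = x ?c + integral {?c..u} (\<lambda>s. ?F (x s))" using xint[of u] by simp
    qed
    moreover have "at t within {?c..?b} = at t within {?c..}"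
    proof (rule at_within_nhd[of t "{..<?b}" "{?c..?b}" "{?c..}"])
      show "{?c..?b} \<inter> {..<?b} - {t} = {?c..} \<inter> {..<?b} - {t}" by auto
    qed auto
    ultimately show ?thesis by simp
  qed
  show ?thesis unfolding is_sol_def
  proof (intro allI impI)
    fix s :: real assume s: "s \<ge> 0"
    have d1: "((\<lambda>s. ?c + s) has_vector_derivative 1) (at s within {0..})"
      by (auto intro!: derivative_eq_intros)
    have img: "(\<lambda>s. ?c + s) ` {0..} = {?c..}"
    proof
      show "(\<lambda>s. ?c + s) ` {0..} \<subseteq> {?c..}" by auto
      show "{?c..} \<subseteq> (\<lambda>s. ?c + s) ` {0..}"
      proof
        fix y assume "y \<in> {?c..}" then show "y \<in> (\<lambda>s. ?c + s) ` {0..}"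
          by (intro image_eqI[of _ _ "y - ?c"]) auto
      qed
    qed
    have d2: "(x has_vector_derivative ?F (x (?c + s))) (at (?c + s) within (\<lambda>s. ?c + s) ` {0..})"
      unfolding img using dx[of "?c + s"] s by simp
    from vector_diff_chain_within[OF d1 d2]
    show "((\<lambda>s. x (?c + s)) has_vector_derivative ?F (x (?c + s))) (at s within {0..})"
      by (simp add: o_def)
  qed
qed

end


context hyb begin

lemma final_bound:
  assumes H3: "H3 f g k N" and NN: "Nt > N"
    and K1: "K1 > 0" and KA: "K2 + A \<ge> 0" and c1: "sqrt ((K2 + A) / K1) \<ge> 1"
    and Kb: "\<And>i y. i \<le> N \<Longrightarrow> K1 * (norm y)\<^sup>2 \<le> V (th (\<tau> i)) y \<and> Q (th (\<tau> i)) y \<le> K2 * (norm y)\<^sup>2"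
    and aA: "\<And>y. a y \<le> A * (norm y)\<^sup>2"
    and Me: "Me > 0" and om: "om > 0"
    and ges: "\<forall>y. is_sol (cl_field f g k \<theta> \<theta>) y \<longrightarrow> (\<forall>t\<ge>0. norm (y t) \<le> Me * exp (- om * t) * norm (y 0))"
    and t: "t \<ge> 0"
  shows "norm (x t) \<le> (max 1 Me * sqrt ((K2 + A) / K1) ^ N * exp (om * (real N * T))) * exp (- om * t) * norm (x 0)"
proof (cases "x 0 = 0")
  case True then show ?thesis using zero_all[OF True t] by simp
next
  case False
  define c where "c = sqrt ((K2 + A) / K1)"
  have c1': "c \<ge> 1" using c1 by (simp add: c_def)
  obtain p where p: "p \<le> N" "th (\<tau> p) = \<theta>" using ident[OF H3 NN False] by blast
  have pb: "norm (x s) \<le> c * norm (x (\<tau> i))" if "i \<le> N" "s \<in> {\<tau> i..\<tau> (Suc i)}" for i s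
    unfolding c_def by (rule piece_bound[OF K1 KA _ _ aA that(2)]) (use Kb[OF that(1)] in auto)
  have ti: "norm (x (\<tau> i)) \<le> c ^ i * norm (x 0)" if "i \<le> N" for i
    using that
  proof (induction i)
    case 0 then show ?case using tau0 by simp
  next
    case (Suc i)
    have "norm (x (\<tau> (Suc i))) \<le> c * norm (x (\<tau> i))"
      using pb[of i "\<tau> (Suc i)"] Suc.prems step_le[of i] by auto
    also have "\<dots> \<le> c * (c ^ i * norm (x 0))"
      using Suc c1' by (intro mult_left_mono) auto
    finally show ?case by simp
  qed
  have cN: "c ^ i \<le> c ^ N" if "i \<le> N" for i by (rule power_increasing[OF that c1'])
  have cpos: "c > 0" using c1' by simp
  have tpN: "\<tau> p \<le> real N * T" using tau_le[of p] p(1) Tp by (meson mult_right_mono of_nat_le_iff order_trans less_imp_le)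
  let ?M = "max 1 Me * c ^ N * exp (om * (real N * T))"
  show ?thesis
  proof (cases "t \<le> \<tau> p")
    case True
    have "norm (x t) \<le> c ^ N * norm (x 0)"
    proof (cases "t = \<tau> p")
      case True then show ?thesis using ti[OF p(1)] cN[OF p(1)] by (meson mult_right_mono norm_ge_zero order_trans)
    next
      case False
      then have tl: "t < \<tau> p" using True by simp
      obtain j where j: "\<tau> j \<le> t" "t < \<tau> (Suc j)" using find_piece[OF t] by blast
      have jp: "j < p" using tau_mono_rev[of j p] j tl by simp
      have "norm (x t) \<le> c * norm (x (\<tau> j))" using pb[of j t] j jp p(1) by auto
      also have "\<dots> \<le> c * (c ^ j * norm (x 0))" using ti[of j] jp p(1) cpos by (intro mult_left_mono) auto
      also have "\<dots> = c ^ Suc j * norm (x 0)" by simp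
      also have "\<dots> \<le> c ^ N * norm (x 0)" using cN[of "Suc j"] jp p(1) by (intro mult_right_mono) auto
      finally show ?thesis .
    qed
    also have "\<dots> \<le> ?M * exp (- om * t) * norm (x 0)"
    proof -
      have "exp (om * (real N * T)) * exp (- om * t) = exp (om * (real N * T - t))"
        by (simp add: exp_add[symmetric] algebra_simps)
      also have "\<dots> \<ge> 1" using True tpN om by simp
      finally have e1: "exp (om * (real N * T)) * exp (- om * t) \<ge> 1" .
      have "c ^ N \<le> max 1 Me * c ^ N * (exp (om * (real N * T)) * exp (- om * t))"
      proof -
        have "c ^ N = 1 * c ^ N * 1" by simp
        also have "\<dots> \<le> max 1 Me * c ^ N * (exp (om * (real N * T)) * exp (- om * t))"
          using e1 cpos by (intro mult_mono) auto
        finally show ?thesis .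
      qed
      then show ?thesis by (intro mult_right_mono) (auto simp: algebra_simps)
    qed
    finally show ?thesis unfolding c_def .
  next
    case False
    then have tp: "t \<ge> \<tau> p" by simp
    have sol: "is_sol (cl_field f g k \<theta> \<theta>) (\<lambda>s. x (\<tau> p + s))" by (rule after_id[OF p(2)])
    have "norm (x (\<tau> p + (t - \<tau> p))) \<le> Me * exp (- om * (t - \<tau> p)) * norm (x (\<tau> p + 0))"
      using ges[rule_format, OF sol, of "t - \<tau> p"] tp by simp
    then have "norm (x t) \<le> Me * exp (- om * (t - \<tau> p)) * norm (x (\<tau> p))" by simp
    also have "\<dots> \<le> Me * exp (- om * (t - \<tau> p)) * (c ^ N * norm (x 0))"
    proof -
      have "norm (x (\<tau> p)) \<le> c ^ N * norm (x 0)"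
        using ti[OF p(1)] mult_right_mono[OF cN[OF p(1)] norm_ge_zero[of "x 0"]] by linarith
      then show ?thesis using Me by (intro mult_left_mono) auto
    qed
    also have "\<dots> = Me * c ^ N * (exp (om * \<tau> p) * exp (- om * t)) * norm (x 0)"
      by (simp add: exp_add[symmetric] algebra_simps)
    also have "\<dots> \<le> max 1 Me * c ^ N * (exp (om * (real N * T)) * exp (- om * t)) * norm (x 0)"
      using tpN om cpos by (intro mult_right_mono mult_mono) auto
    finally show ?thesis unfolding c_def by (simp add: algebra_simps)
  qed
qed

end


theorem theorem3p3:
  fixes f :: "real^'n \<Rightarrow> real^'m \<Rightarrow> real^'n"
    and g :: "real^'n \<Rightarrow> real^'m \<Rightarrow> real^'l^'n"
    and k :: "real^'l \<Rightarrow> real^'n \<Rightarrow> real^'m"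
    and V Q :: "real^'l \<Rightarrow> real^'n \<Rightarrow> real"
    and Mexp \<omega> :: "real^'l \<Rightarrow> real"
    and a :: "real^'n \<Rightarrow> real"
    and N Nt :: nat and T :: real
  assumes f_smooth: "smooth (\<lambda>(x, u). f x u)" and f0: "f 0 0 = 0"
    and g_smooth: "smooth (\<lambda>(x, u). g x u)" and g0: "g 0 0 = 0"
    and k_smooth: "smooth (\<lambda>(\<eta>, x). k \<eta> x)" and k0: "\<And>\<eta>. k \<eta> 0 = 0"
    and V_nonneg: "\<And>\<eta> x. V \<eta> x \<ge> 0" and Q_nonneg: "\<And>\<eta> x. Q \<eta> x \<ge> 0"
    and V_cont: "\<And>\<eta>. continuous_on UNIV (V \<eta>)" and Q_cont: "\<And>\<eta>. continuous_on UNIV (Q \<eta>)"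
    and V_pd: "\<And>\<eta>. pos_def (V \<eta>)" and Q_pd: "\<And>\<eta>. pos_def (Q \<eta>)"
    and V_ru: "\<And>\<eta>. rad_unbounded (V \<eta>)" and Q_ru: "\<And>\<eta>. rad_unbounded (Q \<eta>)"
    and V_jcont: "continuous_on UNIV (\<lambda>(\<eta>, x). V \<eta> x)"
    and Q_jcont: "continuous_on UNIV (\<lambda>(\<eta>, x). Q \<eta> x)"
    and H1_GAS: "\<And>\<eta>. GAS (cl_field f g k \<eta> \<eta>)"
    and H1_VQ: "\<And>\<eta> x t. is_sol (cl_field f g k \<eta> \<eta>) x \<Longrightarrow> t \<ge> 0 \<Longrightarrow>
                   V \<eta> (x t) \<le> Q \<eta> (x 0)"
    and H2: "\<And>\<Theta> M. compact \<Theta> \<Longrightarrow> \<Theta> \<noteq> {} \<Longrightarrow> M \<ge> 0 \<Longrightarrow>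
               \<exists>R>0. \<forall>\<eta>\<in>\<Theta>. \<forall>x. V \<eta> x \<le> M \<longrightarrow> norm x \<le> R"
    and N_pos: "N > 0" and H3: "H3 f g k N"
    and GES: "\<And>\<eta>. Mexp \<eta> > 0 \<and> \<omega> \<eta> > 0 \<and>
               (\<forall>x. is_sol (cl_field f g k \<eta> \<eta>) x \<longrightarrow>
                  (\<forall>t\<ge>0. norm (x t) \<le> Mexp \<eta> * exp (- \<omega> \<eta> * t) * norm (x 0)))"
    and quad: "\<And>\<Theta>. compact \<Theta> \<Longrightarrow> \<Theta> \<noteq> {} \<Longrightarrow>
               \<exists>K1 K2. 0 < K1 \<and> K1 < K2 \<and> (\<forall>x. \<forall>\<eta>\<in>\<Theta>.
                  K1 * (norm x)\<^sup>2 \<le> V \<eta> x \<and> V \<eta> x \<le> Q \<eta> x \<and> Q \<eta> x \<le> K2 * (norm x)\<^sup>2)"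
    and T_pos: "T > 0"
    and a_nonneg: "\<And>x. a x \<ge> 0" and a_cont: "continuous_on UNIV a" and a_pd: "pos_def a"
    and a_quad: "bdd_above {a x / (norm x)\<^sup>2 | x. x \<noteq> 0}"
    and Nt: "Nt > N"
  shows "\<exists>Mt :: real^'l \<Rightarrow> real^'l \<Rightarrow> real. (\<forall>\<theta> \<theta>h. Mt \<theta> \<theta>h > 0) \<and>
           (\<forall>\<theta> x0 \<theta>h0 \<tau> x th. hybrid_sol f g k V Q a T Nt \<theta> \<tau> x th \<and> x 0 = x0 \<and> th 0 = \<theta>h0 \<longrightarrow>
              (\<forall>t\<ge>0. norm (x t) \<le> Mt \<theta> \<theta>h0 * exp (- \<omega> \<theta> * t) * norm x0))"
proof -
  have fc: "continuous_on UNIV (\<lambda>(x, u). f x u)" by (rule smooth_has_derivative(2)[OF f_smooth])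
  have gc: "continuous_on UNIV (\<lambda>(x, u). g x u)" by (rule smooth_has_derivative(2)[OF g_smooth])
  have kc: "continuous_on UNIV (\<lambda>(\<eta>, x). k \<eta> x)" by (rule smooth_has_derivative(2)[OF k_smooth])
  have VQ: "V \<eta> y \<le> Q \<eta> y" for \<eta> y
  proof -
    obtain K1 K2 where "0 < K1 \<and> K1 < K2 \<and> (\<forall>x. \<forall>\<eta>'\<in>{\<eta>}.
                  K1 * (norm x)\<^sup>2 \<le> V \<eta>' x \<and> V \<eta>' x \<le> Q \<eta>' x \<and> Q \<eta>' x \<le> K2 * (norm x)\<^sup>2)"
      using quad[of "{\<eta>}"] by auto
    then show ?thesis by auto
  qed
  have apd: "a y > 0" if "y \<noteq> 0" for y using a_pd that by (simp add: pos_def_def)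
  have a00: "a 0 = 0" using a_pd by (simp add: pos_def_def)
  have lip: "\<exists>\<delta>>0. \<exists>L\<ge>0. \<forall>z. norm z \<le> \<delta> \<longrightarrow> norm (cl_field f g k \<eta> \<theta> z) \<le> L * norm z" for \<eta> \<theta>
    by (rule cl_field_props[OF f_smooth f0 g_smooth g0 k_smooth k0])
  have Nt1: "Nt \<ge> 1" using Nt N_pos by simp
  obtain A0 where A0: "\<And>z. z \<in> {a x / (norm x)\<^sup>2 | x. x \<noteq> 0} \<Longrightarrow> z \<le> A0"
    using a_quad unfolding bdd_above_def by blast
  define A where "A = max A0 0"
  have A: "A \<ge> 0" "\<And>y. a y \<le> A * (norm y)\<^sup>2"
  proof -
    show "A \<ge> 0" by (simp add: A_def)
    fix y :: "real^'n"
    show "a y \<le> A * (norm y)\<^sup>2"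
    proof (cases "y = 0")
      case True then show ?thesis using a00 by simp
    next
      case False
      then have "a y / (norm y)\<^sup>2 \<le> A0" using A0 by blast
      then have "a y \<le> A0 * (norm y)\<^sup>2" using False by (simp add: divide_le_eq)
      also have "\<dots> \<le> A * (norm y)\<^sup>2" by (intro mult_right_mono) (auto simp: A_def)
      finally show ?thesis .
    qed
  qed
  have main: "\<exists>M>0. \<forall>x0 \<tau> x th. hybrid_sol f g k V Q a T Nt \<theta> \<tau> x th \<and> x 0 = x0 \<and> th 0 = \<theta>h0 \<longrightarrow>
              (\<forall>t\<ge>0. norm (x t) \<le> M * exp (- \<omega> \<theta> * t) * norm x0)" for \<theta> \<theta>h0
  proof -
    define \<Theta> where "\<Theta> = cball \<theta> (2 ^ N * norm (\<theta>h0 - \<theta>))"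
    have cT: "compact \<Theta>" by (simp add: \<Theta>_def)
    have "\<theta> \<in> \<Theta>" by (simp add: \<Theta>_def)
    then have neT: "\<Theta> \<noteq> {}" by blast
    obtain K1 K2 where K: "0 < K1" "K1 < K2" "\<And>x \<eta>. \<eta> \<in> \<Theta> \<Longrightarrow>
                  K1 * (norm x)\<^sup>2 \<le> V \<eta> x \<and> V \<eta> x \<le> Q \<eta> x \<and> Q \<eta> x \<le> K2 * (norm x)\<^sup>2"
      using quad[OF cT neT] by blast
    define c where "c = sqrt ((K2 + A) / K1)"
    have c1: "c \<ge> 1"
    proof -
      have "1 \<le> (K2 + A) / K1" using K A by (simp add: field_simps)
      then have "sqrt 1 \<le> sqrt ((K2 + A) / K1)" by (rule real_sqrt_le_mono)
      then show ?thesis by (simp add: c_def)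
    qed
    obtain Me om where G: "Me = Mexp \<theta>" "om = \<omega> \<theta>" "Me > 0" "om > 0"
      "\<forall>y. is_sol (cl_field f g k \<theta> \<theta>) y \<longrightarrow> (\<forall>t\<ge>0. norm (y t) \<le> Me * exp (- om * t) * norm (y 0))"
      using GES[of \<theta>] by blast
    define M where "M = max 1 Me * c ^ N * exp (om * (real N * T))"
    have Mpos: "M > 0" using c1 by (simp add: M_def)
    show ?thesis
    proof (intro exI[of _ M] conjI allI impI Mpos)
      fix x0 \<tau> x th t
      assume h: "hybrid_sol f g k V Q a T Nt \<theta> \<tau> x th \<and> x 0 = x0 \<and> th 0 = \<theta>h0" and t: "(0::real) \<le> t"
      interpret H: hyb f g k V Q a T Nt \<theta> \<tau> x th
        by (unfold_locales) (use h fc gc kc T_pos Nt1 VQ V_cont apd lip in auto)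
      have Kb: "K1 * (norm y)\<^sup>2 \<le> V (th (\<tau> i)) y \<and> Q (th (\<tau> i)) y \<le> K2 * (norm y)\<^sup>2" if "i \<le> N" for i y
      proof -
        have "norm (th (\<tau> i) - \<theta>) \<le> 2 ^ i * norm (th 0 - \<theta>)" by (rule H.th_bound)
        also have "\<dots> \<le> 2 ^ N * norm (\<theta>h0 - \<theta>)"
        proof -
          have "(2::real) ^ i \<le> 2 ^ N" using that by (rule power_increasing) simp
          moreover have "th 0 = \<theta>h0" using h by simp
          ultimately show ?thesis using mult_right_mono[of "(2::real) ^ i" "2 ^ N" "norm (\<theta>h0 - \<theta>)"] by simp
        qed
        finally have "th (\<tau> i) \<in> \<Theta>" by (simp add: \<Theta>_def dist_norm norm_minus_commute)
        from K(3)[OF this, of y] show ?thesis by simp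
      qed
      have "norm (x t) \<le> (max 1 Me * sqrt ((K2 + A) / K1) ^ N * exp (om * (real N * T))) * exp (- om * t) * norm (x 0)"
        by (rule H.final_bound[OF H3 Nt K(1) _ _ Kb A(2) G(3) G(4) G(5) t])
          (use K A c1 in \<open>auto simp: c_def\<close>)
      then show "norm (x t) \<le> M * exp (- \<omega> \<theta> * t) * norm x0"
        using h G by (simp add: M_def c_def)
    qed
  qed
  then have "\<forall>p. \<exists>M>0. \<forall>x0 \<tau> x th. hybrid_sol f g k V Q a T Nt (fst p) \<tau> x th \<and> x 0 = x0 \<and> th 0 = snd p \<longrightarrow>
              (\<forall>t\<ge>0. norm (x t) \<le> M * exp (- \<omega> (fst p) * t) * norm x0)" by blast
  then obtain F where F: "\<forall>p. F p > 0 \<and> (\<forall>x0 \<tau> x th. hybrid_sol f g k V Q a T Nt (fst p) \<tau> x th \<and> x 0 = x0 \<and> th 0 = snd p \<longrightarrow>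
              (\<forall>t\<ge>0. norm (x t) \<le> F p * exp (- \<omega> (fst p) * t) * norm x0))"
    by metis
  show ?thesis
    by (rule exI[of _ "\<lambda>\<theta> \<theta>h. F (\<theta>, \<theta>h)"]) (use F in auto)
qed

end
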